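(* In the $n$-dimensional alcove gambler's ruin environment with a state-independent differentiable policy $\pi_{\vec\theta}$, for a trajectory starting at $\vec\eta\in\mathcal{D}^n_m$ and terminating at $\vec\nu\in\mathcal{H}^n_m$, the single-trajectory REINFORCE policy-gradient estimate is \[ \nabla_{\vec\theta} J = \Big[\sum_{i=1}^n (\nu_i - \eta_i)\,\nabla_{\vec\theta}\log\pi(a = \vec e_i\mid\vec\theta)\Big]\, G_{\vec\eta\vec\nu}, \] where $G_{\vec\eta\vec\nu} = \lambda_{\vec\nu} - \sum_{i=1}^n(\nu_i-\eta_i)$; hence the distribution of the gradient is obtained from the distribution of the terminal state $\vec\nu$, with $\Pr\{\vec s_T=\vec\nu\} = b_{\vec\eta\vec\nu'}\prod_{i}\pi(\vec e_i\mid\vec\theta)^{\nu'_i-\eta_i}\,\pi(a=\vec\nu-\vec\nu'\mid\vec\theta)$, where $\vec\nu'\in\mathcal{D}^n_m$ is the interior neighbour of $\vec\nu$ and $b_{\vec\eta\vec\nu'}$ is the number of positive-unit-step lattice paths from $\vec\eta$ to $\vec\nu'$ staying in $\mathcal{D}^n_m$.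
   Context: $\mathcal{D}^n_m = \{(x_1,\dots,x_n)\in\mathbb{Z}^n : x_1 > x_2 > \cdots > x_n > x_1 - m\}$ and $\mathcal{H}^n_m = \{x : x_i = x_{i+1} \text{ for some } 1\le i<n\}\cup\{x : x_1 - x_n = m\}$. The environment has states $\mathcal{D}^n_m\cup\mathcal{H}^n_m$, actions $\vec e_1,\dots,\vec e_n$ (action $\vec e_i$ moves $x$ to $x+\vec e_i$), terminating states $\mathcal{H}^n_m$, undiscounted reward $-1$ per step plus bonus $\lambda_{\vec s}$ on reaching terminating $\vec s$. The policy does not observe the state. The REINFORCE estimate with batch size one is $\big(\sum_t\nabla_{\vec\theta}\log\pi(a_t\mid\vec\theta)\big)G$, $G$ being the episodic return. *)

theory Defs
  imports "HOL-Analysis.Analysis"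
begin

text \<open>States are integer vectors of length n, represented as lists (0-based indices).
  Action i (for i < n) is the unit vector e_i.\<close>

definition alcoveD :: "nat \<Rightarrow> int \<Rightarrow> int list \<Rightarrow> bool" where
  "alcoveD n m x \<longleftrightarrow> length x = n \<and> n \<ge> 1 \<and>
     (\<forall>i. i + 1 < n \<longrightarrow> x ! i > x ! (i + 1)) \<and> x ! (n - 1) > x ! 0 - m"

definition alcoveH :: "nat \<Rightarrow> int \<Rightarrow> int list \<Rightarrow> bool" where
  "alcoveH n m x \<longleftrightarrow> length x = n \<and> n \<ge> 1 \<and>
     ((\<exists>i. i + 1 < n \<and> x ! i = x ! (i + 1)) \<or> x ! 0 - x ! (n - 1) = m)"

definition step :: "int list \<Rightarrow> nat \<Rightarrow> int list" where
  "step x i = x[i := x ! i + 1]"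

definition run :: "int list \<Rightarrow> nat list \<Rightarrow> int list" where
  "run x as = foldl step x as"

definition episode :: "nat \<Rightarrow> int \<Rightarrow> int list \<Rightarrow> nat list \<Rightarrow> bool" where
  "episode n m eta as \<longleftrightarrow> (\<forall>a\<in>set as. a < n) \<and>
     (\<forall>t < length as. alcoveD n m (run eta (take t as))) \<and> alcoveH n m (run eta as)"

text \<open>Episodic return: reward -1 per step plus the terminal bonus.\<close>
definition episode_return :: "(int list \<Rightarrow> real) \<Rightarrow> int list \<Rightarrow> nat list \<Rightarrow> real" where
  "episode_return lam eta as = lam (run eta as) - real (length as)"

definition grad :: "('p::real_inner \<Rightarrow> real) \<Rightarrow> 'p \<Rightarrow> 'p" where
  "grad f x = (THE D. GDERIV f x :> D)"

text \<open>Single-trajectory REINFORCE estimate (sum_t grad log pol(a_t | theta)) * G.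
  The policy pol theta i is the probability of action e_i; it does not depend on the state.\<close>
definition reinforce :: "('p::real_inner \<Rightarrow> nat \<Rightarrow> real) \<Rightarrow> 'p \<Rightarrow> (int list \<Rightarrow> real)
    \<Rightarrow> int list \<Rightarrow> nat list \<Rightarrow> 'p" where
  "reinforce pol theta lam eta as =
     episode_return lam eta as *\<^sub>R (\<Sum>t<length as. grad (\<lambda>th. ln (pol th (as ! t))) theta)"

definition term_prob :: "nat \<Rightarrow> int \<Rightarrow> ('p \<Rightarrow> nat \<Rightarrow> real) \<Rightarrow> 'p \<Rightarrow> int list \<Rightarrow> int list \<Rightarrow> real" where
  "term_prob n m pol theta eta nu =
     (\<Sum>as\<in>{as. episode n m eta as \<and> run eta as = nu}. \<Prod>t<length as. pol theta (as ! t))"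

definition num_paths :: "nat \<Rightarrow> int \<Rightarrow> int list \<Rightarrow> int list \<Rightarrow> nat" where
  "num_paths n m eta nu = card {as. (\<forall>a\<in>set as. a < n) \<and>
     (\<forall>t \<le> length as. alcoveD n m (run eta (take t as))) \<and> run eta as = nu}"

end

theory Submission
  imports Defs
begin

lemma run_snoc: "run x (as @ [a]) = step (run x as) a"
  by (simp add: run_def)

lemma run_nth:
  "set as \<subseteq> {..<length x} \<Longrightarrow> length (run x as) = length x \<and>
     (\<forall>i<length x. run x as ! i = x ! i + int (count_list as i))"
proof (induction as rule: rev_induct)
  case Nil then show ?case by (simp add: run_def)
next
  case (snoc a as)
  then show ?case by (auto simp: run_snoc step_def nth_list_update)
qed

lemma sum_count:
  fixes f :: "nat \<Rightarrow> 'a::real_vector"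
  shows "set xs \<subseteq> {..<n} \<Longrightarrow> (\<Sum>t<length xs. f (xs!t)) = (\<Sum>i<n. real (count_list xs i) *\<^sub>R f i)"
proof (induction xs rule: rev_induct)
  case Nil then show ?case by simp
next
  case (snoc a xs)
  then have "(\<Sum>t<length (xs@[a]). f ((xs@[a])!t)) = (\<Sum>i<n. real (count_list xs i) *\<^sub>R f i) + f a"
    by (simp add: nth_append)
  also have "\<dots> = (\<Sum>i<n. real (count_list xs i) *\<^sub>R f i + (if i = a then f a else 0))"
    using snoc.prems by (simp add: sum.distrib)
  also have "\<dots> = (\<Sum>i<n. real (count_list (xs@[a]) i) *\<^sub>R f i)"
    by (rule sum.cong) (auto simp: algebra_simps)
  finally show ?case .
qed

lemma prod_count:
  fixes g :: "nat \<Rightarrow> 'a::comm_monoid_mult"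
  shows "set xs \<subseteq> {..<n} \<Longrightarrow> (\<Prod>t<length xs. g (xs!t)) = (\<Prod>i<n. g i ^ count_list xs i)"
proof (induction xs rule: rev_induct)
  case Nil then show ?case by simp
next
  case (snoc a xs)
  then have "(\<Prod>t<length (xs@[a]). g ((xs@[a])!t)) = (\<Prod>i<n. g i ^ count_list xs i) * g a"
    by (simp add: nth_append)
  also have "\<dots> = (\<Prod>i<n. g i ^ count_list xs i * (if i = a then g a else 1))"
    using snoc.prems by (simp add: prod.distrib)
  also have "\<dots> = (\<Prod>i<n. g i ^ count_list (xs@[a]) i)"
    by (rule prod.cong) (auto simp: algebra_simps)
  finally show ?case .
qed

lemma len_count: "set (xs::nat list) \<subseteq> {..<n} \<Longrightarrow> length xs = (\<Sum>i<n. count_list xs i)"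
proof (induction xs rule: rev_induct)
  case Nil then show ?case by simp
next
  case (snoc a xs)
  have "(\<Sum>i<n. count_list (xs@[a]) i) = (\<Sum>i<n. count_list xs i + (if a = i then 1 else 0))"
    by (rule sum.cong) auto
  also have "\<dots> = (\<Sum>i<n. count_list xs i) + (\<Sum>i<n. (if a = i then 1 else 0))"
    by (rule sum.distrib)
  also have "(\<Sum>i<n. (if a = i then 1 else 0::nat)) = 1"
    using snoc.prems by (subst sum.delta') auto
  finally show ?case using snoc by simp
qed

lemma DH_disj: "alcoveD n m x \<Longrightarrow> \<not> alcoveH n m x"
  unfolding alcoveD_def alcoveH_def by force

lemma uniq:
  assumes x: "alcoveD n m x" and y: "alcoveD n m y" and j: "j < n" and k: "k < n"
    and e: "step x j = step y k" and h: "alcoveH n m (step x j)"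
  shows "x = y \<and> j = k"
proof -
  have lx: "length x = n" and ly: "length y = n" using x y by (auto simp: alcoveD_def)
  have zx: "\<And>i. i < n \<Longrightarrow> step x j ! i = x ! i + (if i = j then 1 else 0)"
    using lx j by (simp add: step_def nth_list_update)
  have zy: "\<And>i. i < n \<Longrightarrow> step x j ! i = y ! i + (if i = k then 1 else 0)"
    using ly k e by (simp add: step_def nth_list_update)
  have jk: "j = k"
  proof -
    from h consider (a) i where "i + 1 < n" "step x j ! i = step x j ! (i+1)"
      | (b) "step x j ! 0 - step x j ! (n-1) = m" unfolding alcoveH_def by blast
    then show ?thesis
    proof cases
      case (a i)
      have "x ! i > x ! (i+1)" "y ! i > y ! (i+1)" using x y a(1) by (auto simp: alcoveD_def)
      then show ?thesis using a zx[of i] zx[of "i+1"] zy[of i] zy[of "i+1"]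
        by (auto split: if_splits)
    next
      case b
      have "x ! (n-1) > x ! 0 - m" "y ! (n-1) > y ! 0 - m" using x y by (auto simp: alcoveD_def)
      then show ?thesis using b zx[of 0] zx[of "n-1"] zy[of 0] zy[of "n-1"] j k
        by (auto split: if_splits)
    qed
  qed
  have "x = y"
  proof (rule nth_equalityI)
    show "length x = length y" using lx ly by simp
    fix i assume "i < length x"
    then show "x ! i = y ! i" using zx[of i] zy[of i] jk lx by auto
  qed
  with jk show ?thesis by simp
qed

theorem corollary2:
  fixes n :: nat and m :: int
    and pol :: "'p::euclidean_space \<Rightarrow> nat \<Rightarrow> real" and theta :: 'p
    and lam :: "int list \<Rightarrow> real" and eta nu :: "int list"
  assumes n_pos: "n \<ge> 1"
    and pi_pos: "\<And>th i. i < n \<Longrightarrow> pol th i > 0"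
    and pi_sum: "\<And>th. (\<Sum>i<n. pol th i) = 1"
    and pi_diff: "\<And>th i. i < n \<Longrightarrow> (\<lambda>t. pol t i) differentiable (at th)"
    and eta_D: "alcoveD n m eta"
    and nu_H: "alcoveH n m nu"
  shows "(\<forall>as. episode n m eta as \<and> run eta as = nu \<longrightarrow>
            reinforce pol theta lam eta as =
              (lam nu - real_of_int (\<Sum>i<n. nu ! i - eta ! i)) *\<^sub>R
              (\<Sum>i<n. real_of_int (nu ! i - eta ! i) *\<^sub>R grad (\<lambda>th. ln (pol th i)) theta))
       \<and> (\<forall>nu' j. alcoveD n m nu' \<and> j < n \<and> nu = step nu' j \<longrightarrow>
            term_prob n m pol theta eta nu =
              real (num_paths n m eta nu')
              * (\<Prod>i<n. pol theta i ^ nat (nu' ! i - eta ! i)) * pol theta j)"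
proof (intro conjI allI impI)
  have leta: "length eta = n" using eta_D by (simp add: alcoveD_def)
  fix as assume A: "episode n m eta as \<and> run eta as = nu"
  have sa: "set as \<subseteq> {..<n}" using A by (auto simp: episode_def)
  have cnt: "\<And>i. i < n \<Longrightarrow> nu ! i - eta ! i = int (count_list as i)"
    using run_nth[of as eta] sa leta A by auto
  have s1: "(\<Sum>i<n. nu ! i - eta ! i) = int (length as)"
    using len_count[OF sa] cnt by simp
  have s2: "(\<Sum>i<n. real_of_int (nu ! i - eta ! i) *\<^sub>R grad (\<lambda>th. ln (pol th i)) theta)
     = (\<Sum>i<n. real (count_list as i) *\<^sub>R grad (\<lambda>th. ln (pol th i)) theta)"
    by (rule sum.cong) (auto simp: cnt)
  show "reinforce pol theta lam eta as =
              (lam nu - real_of_int (\<Sum>i<n. nu ! i - eta ! i)) *\<^sub>R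
              (\<Sum>i<n. real_of_int (nu ! i - eta ! i) *\<^sub>R grad (\<lambda>th. ln (pol th i)) theta)"
    unfolding reinforce_def episode_return_def s1 s2
    using A sum_count[OF sa, of "\<lambda>i. grad (\<lambda>th. ln (pol th i)) theta"] by simp
next
  have leta: "length eta = n" using eta_D by (simp add: alcoveD_def)
  fix nu' j assume B: "alcoveD n m nu' \<and> j < n \<and> nu = step nu' j"
  define P where "P = {as. (\<forall>a\<in>set as. a < n) \<and>
     (\<forall>t \<le> length as. alcoveD n m (run eta (take t as))) \<and> run eta as = nu'}"
  define S where "S = {as. episode n m eta as \<and> run eta as = nu}"
  have SP: "S = (\<lambda>bs. bs @ [j]) ` P"
  proof
    show "S \<subseteq> (\<lambda>bs. bs @ [j]) ` P"
    proof
      fix as assume "as \<in> S"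
      then have ep: "episode n m eta as" and rn: "run eta as = nu" by (auto simp: S_def)
      have "as \<noteq> []"
      proof
        assume "as = []"
        then have "run eta as = eta" by (simp add: run_def)
        then show False using rn nu_H DH_disj[OF eta_D] by simp
      qed
      then obtain bs k where asd: "as = bs @ [k]" by (metis rev_exhaust)
      have k: "k < n" and sbs: "\<forall>a\<in>set bs. a < n" using ep asd by (auto simp: episode_def)
      have pre: "\<forall>t \<le> length bs. alcoveD n m (run eta (take t bs))"
      proof (intro allI impI)
        fix t assume "t \<le> length bs"
        then have "t < length as" "take t as = take t bs" using asd by auto
        then show "alcoveD n m (run eta (take t bs))" using ep by (metis episode_def)
      qed
      then have Dbs: "alcoveD n m (run eta bs)" by (metis order_refl take_all)
      have st: "step (run eta bs) k = nu" using rn asd by (simp add: run_snoc)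
      have "run eta bs = nu' \<and> k = j"
        using uniq[OF Dbs, of nu' k j] B k st nu_H by auto
      then show "as \<in> (\<lambda>bs. bs @ [j]) ` P" using asd sbs pre unfolding P_def by auto
    qed
  next
    show "(\<lambda>bs. bs @ [j]) ` P \<subseteq> S"
    proof
      fix as assume "as \<in> (\<lambda>bs. bs @ [j]) ` P"
      then obtain bs where asd: "as = bs @ [j]" and bP: "bs \<in> P" by auto
      have "\<forall>t < length as. alcoveD n m (run eta (take t as))"
      proof (intro allI impI)
        fix t assume "t < length as"
        then have "t \<le> length bs" "take t as = take t bs" using asd by auto
        then show "alcoveD n m (run eta (take t as))" using bP by (auto simp: P_def)
      qed
      moreover have "run eta as = nu" using asd bP B by (simp add: run_snoc P_def)
      ultimately show "as \<in> S" using asd bP B nu_H by (auto simp: S_def episode_def P_def)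
    qed
  qed
  have C: "\<And>bs. bs \<in> P \<Longrightarrow> (\<Prod>t<length (bs @ [j]). pol theta ((bs @ [j]) ! t))
       = (\<Prod>i<n. pol theta i ^ nat (nu' ! i - eta ! i)) * pol theta j"
  proof -
    fix bs assume bP: "bs \<in> P"
    have sb: "set bs \<subseteq> {..<n}" using bP by (auto simp: P_def)
    have rn: "run eta bs = nu'" using bP by (simp add: P_def)
    have cnt: "\<And>i. i < n \<Longrightarrow> nat (nu' ! i - eta ! i) = count_list bs i"
      using run_nth[of bs eta] sb leta rn by auto
    have "(\<Prod>t<length (bs @ [j]). pol theta ((bs @ [j]) ! t))
        = (\<Prod>t<length bs. pol theta (bs ! t)) * pol theta j"
      by (simp add: nth_append)
    also have "\<dots> = (\<Prod>i<n. pol theta i ^ count_list bs i) * pol theta j"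
      using prod_count[OF sb, of "pol theta"] by simp
    also have "\<dots> = (\<Prod>i<n. pol theta i ^ nat (nu' ! i - eta ! i)) * pol theta j"
      using cnt by (metis (no_types, lifting) lessThan_iff prod.cong)
    finally show "?thesis bs" .
  qed
  have inj: "inj_on (\<lambda>bs. bs @ [j]) P" by (auto simp: inj_on_def)
  have "term_prob n m pol theta eta nu = (\<Sum>as\<in>S. \<Prod>t<length as. pol theta (as ! t))"
    by (simp add: term_prob_def S_def)
  also have "\<dots> = (\<Sum>bs\<in>P. \<Prod>t<length (bs @ [j]). pol theta ((bs @ [j]) ! t))"
    unfolding SP by (subst sum.reindex[OF inj]) simp
  also have "\<dots> = (\<Sum>bs\<in>P. (\<Prod>i<n. pol theta i ^ nat (nu' ! i - eta ! i)) * pol theta j)"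
    by (rule sum.cong[OF refl], rule C)
  also have "\<dots> = real (card P) * ((\<Prod>i<n. pol theta i ^ nat (nu' ! i - eta ! i)) * pol theta j)"
    by simp
  finally show "term_prob n m pol theta eta nu =
              real (num_paths n m eta nu')
              * (\<Prod>i<n. pol theta i ^ nat (nu' ! i - eta ! i)) * pol theta j"
    by (simp add: num_paths_def P_def mult.assoc)
qed

end
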